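(* Let $n \ge 2$ be an integer and let $A_n \in \{0,1\}^{[2]^n \times [2]^{n-1}}$ be the binary single-deletion channel, i.e. $(A_n)_{x,y} = 1$ if and only if $y$ can be obtained from $x$ by deleting exactly one symbol. For a binary string $y$ let $r_y$ be the number of runs of $y$, $u_y$ the number of runs of length one in $y$, and $b_y$ the number of runs of length one that occur at the start or at the end of $y$. Define \[ f(r,u,b) = \frac{1}{r}\left(1 + \frac{\max(2u - b - 2,\,0)}{(r+2)(r+1)}\right)^{-1}. \] Then the vector $z \in \mathbb{R}^{[2]^{n-1}}$ with $z_y = f(r_y,u_y,b_y)$ is feasible for $\kappa^*(A_n)$, i.e. $z \ge \mathbf{0}$ and $A_n z \ge \mathbf{1}$ entrywise; consequently $\kappa^*(A_n) \le \sum_{y \in [2]^{n-1}} z_y$.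
   Context: $[2]=\{0,1\}$ and $[2]^m$ is the set of binary strings of length $m$. A run of a string is a maximal block of consecutive equal symbols. For a $0/1$ matrix $A \in \{0,1\}^{X\times Y}$ (a combinatorial channel with inputs $X$ and outputs $Y$), the minimum fractional output covering number is $\kappa^*(A) = \min\{\mathbf{1}^T z : z \in \mathbb{R}^Y,\ z \ge \mathbf{0},\ Az \ge \mathbf{1}\}$, where inequalities are entrywise and $\mathbf{1},\mathbf{0}$ denote all-ones and all-zeros vectors. *)

theory Defs
  imports Complex_Main
begin

text \<open>Binary strings are lists over bool (bool plays the role of the alphabet [2] = {0,1}).\<close>

definition bin_strings :: "nat \<Rightarrow> bool list set" where
  "bin_strings m = {xs. length xs = m}"

definition one_deletion :: "'a list \<Rightarrow> 'a list \<Rightarrow> bool" where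
  "one_deletion x y \<longleftrightarrow> (\<exists>i < length x. y = take i x @ drop (Suc i) x)"

definition del_channel :: "bool list \<Rightarrow> bool list \<Rightarrow> real" where
  "del_channel x y = (if one_deletion x y then 1 else 0)"

fun runs :: "'a list \<Rightarrow> 'a list list" where
  "runs [] = []"
| "runs (x # xs) = (case runs xs of
       [] \<Rightarrow> [[x]]
     | r # rs \<Rightarrow> (if hd r = x then (x # r) # rs else [x] # r # rs))"

definition num_runs :: "'a list \<Rightarrow> nat" where
  "num_runs y = length (runs y)"

definition num_unit_runs :: "'a list \<Rightarrow> nat" where
  "num_unit_runs y = length (filter (\<lambda>r. length r = 1) (runs y))"

text \<open>Number of runs of length one among the first and the last run (a run counted once).\<close>
definition num_boundary_unit_runs :: "'a list \<Rightarrow> nat" where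
  "num_boundary_unit_runs y =
     card {i. i < length (runs y) \<and> (i = 0 \<or> i = length (runs y) - 1) \<and> length (runs y ! i) = 1}"

definition fweight :: "nat \<Rightarrow> nat \<Rightarrow> nat \<Rightarrow> real" where
  "fweight r u b = (1 / real r) *
     inverse (1 + max (2 * real u - real b - 2) 0 / ((real r + 2) * (real r + 1)))"

definition frac_cover_feasible :: "'x set \<Rightarrow> 'y set \<Rightarrow> ('x \<Rightarrow> 'y \<Rightarrow> real) \<Rightarrow> ('y \<Rightarrow> real) \<Rightarrow> bool" where
  "frac_cover_feasible X Y A z \<longleftrightarrow>
     (\<forall>y\<in>Y. z y \<ge> 0) \<and> (\<forall>x\<in>X. (\<Sum>y\<in>Y. A x y * z y) \<ge> 1)"

definition kappa_star :: "'x set \<Rightarrow> 'y set \<Rightarrow> ('x \<Rightarrow> 'y \<Rightarrow> real) \<Rightarrow> real" where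
  "kappa_star X Y A = Inf {(\<Sum>y\<in>Y. z y) | z. frac_cover_feasible X Y A z}"

end

theory Submission
  imports Defs
begin

definition good :: "'a list list \<Rightarrow> bool" where
  "good rs \<longleftrightarrow> (\<forall>r\<in>set rs. r \<noteq> [] \<and> (\<forall>a\<in>set r. a = hd r)) \<and> successively (\<lambda>a b. hd a \<noteq> hd b) rs"

lemma runs_good: "good (runs xs) \<and> concat (runs xs) = xs"
proof (induction xs)
  case Nil
  then show ?case by (simp add: good_def)
next
  case (Cons a xs)
  show ?case
  proof (cases "runs xs")
    case Nil
    with Cons have "xs = []" by simp
    with Nil show ?thesis by (simp add: good_def)
  next
    case (Cons r rs)
    note C = Cons
    from Cons.IH C have g: "good (r # rs)" and cc: "concat (r#rs) = xs" by auto
    show ?thesis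
    proof (cases "hd r = a")
      case True
      then show ?thesis using g cc C
        by (auto simp: good_def successively_Cons split: list.splits)
    next
      case False
      then show ?thesis using g cc C
        by (auto simp: good_def successively_Cons)
    qed
  qed
qed

lemma runs_app_aux:
  assumes "r \<noteq> []" "\<forall>a\<in>set r. a = hd r" "runs ys = rs" "rs = [] \<or> hd (hd rs) \<noteq> hd r"
  shows "runs (r @ ys) = r # rs"
  using assms
proof (induction r)
  case Nil
  then show ?case by simp
next
  case (Cons a r')
  show ?case
  proof (cases "r' = []")
    case True
    then show ?thesis using Cons.prems by (auto split: list.splits)
  next
    case False
    then have "hd r' = a" using Cons.prems(2) by (cases r') auto
    then have "runs (r' @ ys) = r' # rs" using Cons False by auto
    then show ?thesis using \<open>hd r' = a\<close> by simp
  qed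
qed

lemma runs_unique: "good rs \<Longrightarrow> runs (concat rs) = rs"
proof (induction rs)
  case Nil
  then show ?case by simp
next
  case (Cons r rs)
  then have "good rs" by (auto simp: good_def successively_Cons)
  with Cons have IH: "runs (concat rs) = rs" by simp
  show ?case using Cons.prems IH
    by (simp, intro runs_app_aux) (auto simp: good_def successively_Cons neq_Nil_conv)
qed

lemma frac2_ge:
  fixes a b d1 d2 :: real
  assumes "0 < d1" "0 < d2" "0 \<le> a*d2 + b*d1 - d1*d2"
  shows "1 \<le> a/d1 + b/d2"
proof -
  have "a/d1 + b/d2 - 1 = (a*d2 + b*d1 - d1*d2)/(d1*d2)" using assms by (simp add: field_simps)
  also have "\<dots> \<ge> 0" using assms by simp
  finally show ?thesis by simp
qed

lemma frac3_ge:
  fixes a b c d1 d2 d3 :: real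
  assumes "0 < d1" "0 < d2" "0 < d3" "0 \<le> a*d2*d3 + b*d1*d3 + c*d1*d2 - d1*d2*d3"
  shows "1 \<le> a/d1 + b/d2 + c/d3"
proof -
  have "a/d1 + b/d2 + c/d3 - 1 = (a*d2*d3 + b*d1*d3 + c*d1*d2 - d1*d2*d3)/(d1*d2*d3)" using assms by (simp add: field_simps)
  also have "\<dots> \<ge> 0" using assms by simp
  finally show ?thesis by simp
qed

lemma frac2_ge':
  fixes a b p q d1 d2 :: real
  assumes "0 < d1" "0 < d2" "0 \<le> a*p*d2 + b*q*d1 - d1*d2"
  shows "1 \<le> a*(p/d1) + b*(q/d2)"
proof -
  have "a*(p/d1) + b*(q/d2) - 1 = (a*p*d2 + b*q*d1 - d1*d2)/(d1*d2)" using assms by (simp add: field_simps)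
  also have "\<dots> \<ge> 0" using assms by simp
  finally show ?thesis by simp
qed

lemma frac3_ge':
  fixes a b c p q s d1 d2 d3 :: real
  assumes "0 < d1" "0 < d2" "0 < d3" "0 \<le> a*p*d2*d3 + b*q*d1*d3 + c*s*d1*d2 - d1*d2*d3"
  shows "1 \<le> a*(p/d1) + b*(q/d2) + c*(s/d3)"
proof -
  have "a*(p/d1) + b*(q/d2) + c*(s/d3) - 1 = (a*p*d2*d3 + b*q*d1*d3 + c*s*d1*d2 - d1*d2*d3)/(d1*d2*d3)" using assms by (simp add: field_simps)
  also have "\<dots> \<ge> 0" using assms by simp
  finally show ?thesis by simp
qed

lemma ineq_P0:
  fixes r u :: real
  assumes h1: "2 \<le> u" and h2: "u+2 \<le> r"
  shows "1 \<le> (r-u) * (((r+2)*(r+1))/(r*(((r+2)*(r+1))+2*u))) + u * ((((r-2)+2)*((r-2)+1))/((r-2)*((((r-2)+2)*((r-2)+1))+(2*u-4))))"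
proof (rule frac2_ge')
  show "0 < (r*(((r+2)*(r+1))+2*u))"
  proof -
    have eq: "(r*(((r+2)*(r+1))+2*u)) = 136 + 78 * (r-u-2) + 15 * (r-u-2)^2 + 1 * (r-u-2)^3 + 86 * (u-2) + 32 * (u-2) * (r-u-2) + 3 * (u-2) * (r-u-2)^2 + 17 * (u-2)^2 + 3 * (u-2)^2 * (r-u-2) + 1 * (u-2)^3" by algebra
    show ?thesis unfolding eq using h1 h2 by (intro add_pos_nonneg mult_nonneg_nonneg zero_le_power add_nonneg_nonneg; linarith)
  qed
  show "0 < ((r-2)*((((r-2)+2)*((r-2)+1))+(2*u-4)))"
  proof -
    have eq: "((r-2)*((((r-2)+2)*((r-2)+1))+(2*u-4))) = 24 + 26 * (r-u-2) + 9 * (r-u-2)^2 + 1 * (r-u-2)^3 + 30 * (u-2) + 20 * (u-2) * (r-u-2) + 3 * (u-2) * (r-u-2)^2 + 11 * (u-2)^2 + 3 * (u-2)^2 * (r-u-2) + 1 * (u-2)^3" by algebra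
    show ?thesis unfolding eq using h1 h2 by (intro add_pos_nonneg mult_nonneg_nonneg zero_le_power add_nonneg_nonneg; linarith)
  qed
  have eq: "(r-u)*((r+2)*(r+1))*((r-2)*((((r-2)+2)*((r-2)+1))+(2*u-4))) + u*(((r-2)+2)*((r-2)+1))*(r*(((r+2)*(r+1))+2*u)) - (r*(((r+2)*(r+1))+2*u))*((r-2)*((((r-2)+2)*((r-2)+1))+(2*u-4))) = 1440 + 1176 * (r-u-2) + 316 * (r-u-2)^2 + 28 * (r-u-2)^3 + 1784 * (u-2) + 1124 * (u-2) * (r-u-2) + 226 * (u-2) * (r-u-2)^2 + 14 * (u-2) * (r-u-2)^3 + 752 * (u-2)^2 + 320 * (u-2)^2 * (r-u-2) + 34 * (u-2)^2 * (r-u-2)^2 + 122 * (u-2)^3 + 26 * (u-2)^3 * (r-u-2) + 6 * (u-2)^4"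
    by algebra
  show "0 \<le> (r-u)*((r+2)*(r+1))*((r-2)*((((r-2)+2)*((r-2)+1))+(2*u-4))) + u*(((r-2)+2)*((r-2)+1))*(r*(((r+2)*(r+1))+2*u)) - (r*(((r+2)*(r+1))+2*u))*((r-2)*((((r-2)+2)*((r-2)+1))+(2*u-4)))"
    unfolding eq using h1 h2 by (intro add_nonneg_nonneg mult_nonneg_nonneg zero_le_power; linarith)
qed

lemma ineq_P1:
  fixes r u :: real
  assumes h1: "2 \<le> u" and h2: "u+1 \<le> r"
  shows "1 \<le> (r-u) * (((r+2)*(r+1))/(r*(((r+2)*(r+1))+(2*u-1)))) + (u-1) * ((((r-2)+2)*((r-2)+1))/((r-2)*((((r-2)+2)*((r-2)+1))+(2*u-4)))) + 1 * ((((r-1)+2)*((r-1)+1))/((r-1)*((((r-1)+2)*((r-1)+1))+(2*u-4))))"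
proof (rule frac3_ge')
  show "0 < (r*(((r+2)*(r+1))+(2*u-1)))"
  proof -
    have eq: "(r*(((r+2)*(r+1))+(2*u-1))) = 69 + 50 * (r-u-1) + 12 * (r-u-1)^2 + 1 * (r-u-1)^3 + 56 * (u-2) + 26 * (u-2) * (r-u-1) + 3 * (u-2) * (r-u-1)^2 + 14 * (u-2)^2 + 3 * (u-2)^2 * (r-u-1) + 1 * (u-2)^3" by algebra
    show ?thesis unfolding eq using h1 h2 by (intro add_pos_nonneg mult_nonneg_nonneg zero_le_power add_nonneg_nonneg; linarith)
  qed
  show "0 < ((r-2)*((((r-2)+2)*((r-2)+1))+(2*u-4)))"
  proof -
    have eq: "((r-2)*((((r-2)+2)*((r-2)+1))+(2*u-4))) = 6 + 11 * (r-u-1) + 6 * (r-u-1)^2 + 1 * (r-u-1)^3 + 13 * (u-2) + 14 * (u-2) * (r-u-1) + 3 * (u-2) * (r-u-1)^2 + 8 * (u-2)^2 + 3 * (u-2)^2 * (r-u-1) + 1 * (u-2)^3" by algebra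
    show ?thesis unfolding eq using h1 h2 by (intro add_pos_nonneg mult_nonneg_nonneg zero_le_power add_nonneg_nonneg; linarith)
  qed
  show "0 < ((r-1)*((((r-1)+2)*((r-1)+1))+(2*u-4)))"
  proof -
    have eq: "((r-1)*((((r-1)+2)*((r-1)+1))+(2*u-4))) = 24 + 26 * (r-u-1) + 9 * (r-u-1)^2 + 1 * (r-u-1)^3 + 30 * (u-2) + 20 * (u-2) * (r-u-1) + 3 * (u-2) * (r-u-1)^2 + 11 * (u-2)^2 + 3 * (u-2)^2 * (r-u-1) + 1 * (u-2)^3" by algebra
    show ?thesis unfolding eq using h1 h2 by (intro add_pos_nonneg mult_nonneg_nonneg zero_le_power add_nonneg_nonneg; linarith)
  qed
  have eq: "(r-u)*((r+2)*(r+1))*((r-2)*((((r-2)+2)*((r-2)+1))+(2*u-4)))*((r-1)*((((r-1)+2)*((r-1)+1))+(2*u-4))) + (u-1)*(((r-2)+2)*((r-2)+1))*(r*(((r+2)*(r+1))+(2*u-1)))*((r-1)*((((r-1)+2)*((r-1)+1))+(2*u-4))) + 1*(((r-1)+2)*((r-1)+1))*(r*(((r+2)*(r+1))+(2*u-1)))*((r-2)*((((r-2)+2)*((r-2)+1))+(2*u-4))) - (r*(((r+2)*(r+1))+(2*u-1)))*((r-2)*((((r-2)+2)*((r-2)+1))+(2*u-4)))*((r-1)*((((r-1)+2)*((r-1)+1))+(2*u-4))) = 7848 + 18246 * (r-u-1) + 17315 * (r-u-1)^2 + 8595 * (r-u-1)^3 + 2357 * (r-u-1)^4 + 339 * (r-u-1)^5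 + 20 * (r-u-1)^6 + 25518 * (u-2) + 49576 * (u-2) * (r-u-1) + 38437 * (u-2) * (r-u-1)^2 + 15173 * (u-2) * (r-u-1)^3 + 3190 * (u-2) * (r-u-1)^4 + 333 * (u-2) * (r-u-1)^5 + 13 * (u-2) * (r-u-1)^6 + 32805 * (u-2)^2 + 51353 * (u-2)^2 * (r-u-1) + 31083 * (u-2)^2 * (r-u-1)^2 + 9102 * (u-2)^2 * (r-u-1)^3 + 1287 * (u-2)^2 * (r-u-1)^4 + 70 * (u-2)^2 * (r-u-1)^5 + 21447 * (u-2)^3 + 25915 * (u-2)^3 * (r-u-1) + 11460 * (u-2)^3 * (r-u-1)^2 + 2202 * (u-2)^3 * (r-u-1)^3 + 155 * (u-2)^3 * (r-u-1)^4 + 7648 * (u-2)^4 + 6679 * (u-2)^4 * (r-u-1) + 1914 * (u-2)^4 * (r-u-1)^2 + 180 * (u-2)^4 * (r-u-1)^3 + 1470 * (u-2)^5 + 825 * (u-2)^5 * (r-u-1) + 115 * (u-2)^5 * (r-u-1)^2 + 139 * (u-2)^6 + 38 * (u-2)^6 * (r-u-1) + 5 * (u-2)^7"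
    by algebra
  show "0 \<le> (r-u)*((r+2)*(r+1))*((r-2)*((((r-2)+2)*((r-2)+1))+(2*u-4)))*((r-1)*((((r-1)+2)*((r-1)+1))+(2*u-4))) + (u-1)*(((r-2)+2)*((r-2)+1))*(r*(((r+2)*(r+1))+(2*u-1)))*((r-1)*((((r-1)+2)*((r-1)+1))+(2*u-4))) + 1*(((r-1)+2)*((r-1)+1))*(r*(((r+2)*(r+1))+(2*u-1)))*((r-2)*((((r-2)+2)*((r-2)+1))+(2*u-4))) - (r*(((r+2)*(r+1))+(2*u-1)))*((r-2)*((((r-2)+2)*((r-2)+1))+(2*u-4)))*((r-1)*((((r-1)+2)*((r-1)+1))+(2*u-4)))"
    unfolding eq using h1 h2 by (intro add_nonneg_nonneg mult_nonneg_nonneg zero_le_power; linarith)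
qed

lemma ineq_P2:
  fixes r u :: real
  assumes h1: "3 \<le> u" and h2: "u \<le> r"
  shows "1 \<le> (r-u) * (((r+2)*(r+1))/(r*(((r+2)*(r+1))+(2*u-2)))) + (u-2) * ((((r-2)+2)*((r-2)+1))/((r-2)*((((r-2)+2)*((r-2)+1))+(2*u-4)))) + 2 * ((((r-1)+2)*((r-1)+1))/((r-1)*((((r-1)+2)*((r-1)+1))+(2*u-4))))"
proof (rule frac3_ge')
  show "0 < (r*(((r+2)*(r+1))+(2*u-2)))"
  proof -
    have eq: "(r*(((r+2)*(r+1))+(2*u-2))) = 72 + 51 * (r-u) + 12 * (r-u)^2 + 1 * (r-u)^3 + 57 * (u-3) + 26 * (u-3) * (r-u) + 3 * (u-3) * (r-u)^2 + 14 * (u-3)^2 + 3 * (u-3)^2 * (r-u) + 1 * (u-3)^3" by algebra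
    show ?thesis unfolding eq using h1 h2 by (intro add_pos_nonneg mult_nonneg_nonneg zero_le_power add_nonneg_nonneg; linarith)
  qed
  show "0 < ((r-2)*((((r-2)+2)*((r-2)+1))+(2*u-4)))"
  proof -
    have eq: "((r-2)*((((r-2)+2)*((r-2)+1))+(2*u-4))) = 8 + 13 * (r-u) + 6 * (r-u)^2 + 1 * (r-u)^3 + 15 * (u-3) + 14 * (u-3) * (r-u) + 3 * (u-3) * (r-u)^2 + 8 * (u-3)^2 + 3 * (u-3)^2 * (r-u) + 1 * (u-3)^3" by algebra
    show ?thesis unfolding eq using h1 h2 by (intro add_pos_nonneg mult_nonneg_nonneg zero_le_power add_nonneg_nonneg; linarith)
  qed
  show "0 < ((r-1)*((((r-1)+2)*((r-1)+1))+(2*u-4)))"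
  proof -
    have eq: "((r-1)*((((r-1)+2)*((r-1)+1))+(2*u-4))) = 28 + 28 * (r-u) + 9 * (r-u)^2 + 1 * (r-u)^3 + 32 * (u-3) + 20 * (u-3) * (r-u) + 3 * (u-3) * (r-u)^2 + 11 * (u-3)^2 + 3 * (u-3)^2 * (r-u) + 1 * (u-3)^3" by algebra
    show ?thesis unfolding eq using h1 h2 by (intro add_pos_nonneg mult_nonneg_nonneg zero_le_power add_nonneg_nonneg; linarith)
  qed
  have eq: "(r-u)*((r+2)*(r+1))*((r-2)*((((r-2)+2)*((r-2)+1))+(2*u-4)))*((r-1)*((((r-1)+2)*((r-1)+1))+(2*u-4))) + (u-2)*(((r-2)+2)*((r-2)+1))*(r*(((r+2)*(r+1))+(2*u-2)))*((r-1)*((((r-1)+2)*((r-1)+1))+(2*u-4))) + 2*(((r-1)+2)*((r-1)+1))*(r*(((r+2)*(r+1))+(2*u-2)))*((r-2)*((((r-2)+2)*((r-2)+1))+(2*u-4))) - (r*(((r+2)*(r+1))+(2*u-2)))*((r-2)*((((r-2)+2)*((r-2)+1))+(2*u-4)))*((r-1)*((((r-1)+2)*((r-1)+1))+(2*u-4))) = 9792 + 21784 * (r-u) + 19872 * (r-u)^2 + 9644 * (r-u)^3 + 2640 * (r-u)^4 + 388 * (r-u)^5 + 24 * (r-u)^6 + 29064 * (u-3) + 53608 * (u-3) * (r-u) + 40004 * (u-3) * (r-u)^2 + 15432 * (u-3) * (r-u)^3 + 3200 * (u-3) * (r-u)^4 + 328 * (u-3) * (r-u)^5 + 12 * (u-3)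 * (r-u)^6 + 34040 * (u-3)^2 + 50820 * (u-3)^2 * (r-u) + 29848 * (u-3)^2 * (r-u)^2 + 8592 * (u-3)^2 * (r-u)^3 + 1200 * (u-3)^2 * (r-u)^4 + 64 * (u-3)^2 * (r-u)^5 + 20396 * (u-3)^3 + 23800 * (u-3)^3 * (r-u) + 10360 * (u-3)^3 * (r-u)^2 + 1984 * (u-3)^3 * (r-u)^3 + 140 * (u-3)^3 * (r-u)^4 + 6744 * (u-3)^4 + 5804 * (u-3)^4 * (r-u) + 1672 * (u-3)^4 * (r-u)^2 + 160 * (u-3)^4 * (r-u)^3 + 1224 * (u-3)^5 + 696 * (u-3)^5 * (r-u) + 100 * (u-3)^5 * (r-u)^2 + 112 * (u-3)^6 + 32 * (u-3)^6 * (r-u) + 4 * (u-3)^7"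
    by algebra
  show "0 \<le> (r-u)*((r+2)*(r+1))*((r-2)*((((r-2)+2)*((r-2)+1))+(2*u-4)))*((r-1)*((((r-1)+2)*((r-1)+1))+(2*u-4))) + (u-2)*(((r-2)+2)*((r-2)+1))*(r*(((r+2)*(r+1))+(2*u-2)))*((r-1)*((((r-1)+2)*((r-1)+1))+(2*u-4))) + 2*(((r-1)+2)*((r-1)+1))*(r*(((r+2)*(r+1))+(2*u-2)))*((r-2)*((((r-2)+2)*((r-2)+1))+(2*u-4))) - (r*(((r+2)*(r+1))+(2*u-2)))*((r-2)*((((r-2)+2)*((r-2)+1))+(2*u-4)))*((r-1)*((((r-1)+2)*((r-1)+1))+(2*u-4)))"
    unfolding eq using h1 h2 by (intro add_nonneg_nonneg mult_nonneg_nonneg zero_le_power; linarith)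
qed

lemma ineq_P2z:
  fixes r u :: real
  assumes h1: "True" and h2: "2 \<le> r"
  shows "1 \<le> (r-2) * (((r+2)*(r+1))/(r*(((r+2)*(r+1))+2))) + 2 * ((((r-1)+2)*((r-1)+1))/((r-1)*(((r-1)+2)*((r-1)+1))))"
proof (rule frac2_ge')
  show "0 < (r*(((r+2)*(r+1))+2))"
  proof -
    have eq: "(r*(((r+2)*(r+1))+2)) = 28 + 28 * (r-2) + 9 * (r-2)^2 + 1 * (r-2)^3" by algebra
    show ?thesis unfolding eq using h1 h2 by (intro add_pos_nonneg mult_nonneg_nonneg zero_le_power add_nonneg_nonneg; linarith)
  qed
  show "0 < ((r-1)*(((r-1)+2)*((r-1)+1)))"
  proof -
    have eq: "((r-1)*(((r-1)+2)*((r-1)+1))) = 6 + 11 * (r-2) + 6 * (r-2)^2 + 1 * (r-2)^3" by algebra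
    show ?thesis unfolding eq using h1 h2 by (intro add_pos_nonneg mult_nonneg_nonneg zero_le_power add_nonneg_nonneg; linarith)
  qed
  have eq: "(r-2)*((r+2)*(r+1))*((r-1)*(((r-1)+2)*((r-1)+1))) + 2*(((r-1)+2)*((r-1)+1))*(r*(((r+2)*(r+1))+2)) - (r*(((r+2)*(r+1))+2))*((r-1)*(((r-1)+2)*((r-1)+1))) = 168 + 212 * (r-2) + 88 * (r-2)^2 + 12 * (r-2)^3"
    by algebra
  show "0 \<le> (r-2)*((r+2)*(r+1))*((r-1)*(((r-1)+2)*((r-1)+1))) + 2*(((r-1)+2)*((r-1)+1))*(r*(((r+2)*(r+1))+2)) - (r*(((r+2)*(r+1))+2))*((r-1)*(((r-1)+2)*((r-1)+1)))"
    unfolding eq using h1 h2 by (intro add_nonneg_nonneg mult_nonneg_nonneg zero_le_power; linarith)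
qed

lemma ineq_Q0:
  fixes r u :: real
  assumes h1: "True" and h2: "3 \<le> r"
  shows "1 \<le> (r-1) * (((r+2)*(r+1))/(r*(((r+2)*(r+1))+2))) + 1 * ((((r-2)+2)*((r-2)+1))/((r-2)*(((r-2)+2)*((r-2)+1))))"
proof (rule frac2_ge')
  show "0 < (r*(((r+2)*(r+1))+2))"
  proof -
    have eq: "(r*(((r+2)*(r+1))+2)) = 66 + 49 * (r-3) + 12 * (r-3)^2 + 1 * (r-3)^3" by algebra
    show ?thesis unfolding eq using h1 h2 by (intro add_pos_nonneg mult_nonneg_nonneg zero_le_power add_nonneg_nonneg; linarith)
  qed
  show "0 < ((r-2)*(((r-2)+2)*((r-2)+1)))"
  proof -
    have eq: "((r-2)*(((r-2)+2)*((r-2)+1))) = 6 + 11 * (r-3) + 6 * (r-3)^2 + 1 * (r-3)^3" by algebra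
    show ?thesis unfolding eq using h1 h2 by (intro add_pos_nonneg mult_nonneg_nonneg zero_le_power add_nonneg_nonneg; linarith)
  qed
  have eq: "(r-1)*((r+2)*(r+1))*((r-2)*(((r-2)+2)*((r-2)+1))) + 1*(((r-2)+2)*((r-2)+1))*(r*(((r+2)*(r+1))+2)) - (r*(((r+2)*(r+1))+2))*((r-2)*(((r-2)+2)*((r-2)+1))) = 240 + 272 * (r-3) + 100 * (r-3)^2 + 12 * (r-3)^3"
    by algebra
  show "0 \<le> (r-1)*((r+2)*(r+1))*((r-2)*(((r-2)+2)*((r-2)+1))) + 1*(((r-2)+2)*((r-2)+1))*(r*(((r+2)*(r+1))+2)) - (r*(((r+2)*(r+1))+2))*((r-2)*(((r-2)+2)*((r-2)+1)))"
    unfolding eq using h1 h2 by (intro add_nonneg_nonneg mult_nonneg_nonneg zero_le_power; linarith)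
qed

lemma ineq_Q1:
  fixes r u :: real
  assumes h1: "True" and h2: "2 \<le> r"
  shows "1 \<le> (r-1) * (((r+2)*(r+1))/(r*(((r+2)*(r+1))+1))) + 1 * ((((r-1)+2)*((r-1)+1))/((r-1)*(((r-1)+2)*((r-1)+1))))"
proof (rule frac2_ge')
  show "0 < (r*(((r+2)*(r+1))+1))"
  proof -
    have eq: "(r*(((r+2)*(r+1))+1)) = 26 + 27 * (r-2) + 9 * (r-2)^2 + 1 * (r-2)^3" by algebra
    show ?thesis unfolding eq using h1 h2 by (intro add_pos_nonneg mult_nonneg_nonneg zero_le_power add_nonneg_nonneg; linarith)
  qed
  show "0 < ((r-1)*(((r-1)+2)*((r-1)+1)))"
  proof -
    have eq: "((r-1)*(((r-1)+2)*((r-1)+1))) = 6 + 11 * (r-2) + 6 * (r-2)^2 + 1 * (r-2)^3" by algebra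
    show ?thesis unfolding eq using h1 h2 by (intro add_pos_nonneg mult_nonneg_nonneg zero_le_power add_nonneg_nonneg; linarith)
  qed
  have eq: "(r-1)*((r+2)*(r+1))*((r-1)*(((r-1)+2)*((r-1)+1))) + 1*(((r-1)+2)*((r-1)+1))*(r*(((r+2)*(r+1))+1)) - (r*(((r+2)*(r+1))+1))*((r-1)*(((r-1)+2)*((r-1)+1))) = 72 + 90 * (r-2) + 37 * (r-2)^2 + 5 * (r-2)^3"
    by algebra
  show "0 \<le> (r-1)*((r+2)*(r+1))*((r-1)*(((r-1)+2)*((r-1)+1))) + 1*(((r-1)+2)*((r-1)+1))*(r*(((r+2)*(r+1))+1)) - (r*(((r+2)*(r+1))+1))*((r-1)*(((r-1)+2)*((r-1)+1)))"
    unfolding eq using h1 h2 by (intro add_nonneg_nonneg mult_nonneg_nonneg zero_le_power; linarith)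
qed

definition G :: "nat \<Rightarrow> real \<Rightarrow> real" where
  "G r M = (1 / real r) * inverse (1 + max M 0 / ((real r + 2) * (real r + 1)))"

lemma fweight_G: "fweight r u b = G r (2 * real u - real b - 2)"
  by (simp add: fweight_def G_def)

lemma G_anti:
  assumes "M \<le> M'"
  shows "G r M' \<le> G r M"
proof -
  have D: "0 < (real r + 2) * (real r + 1)" by simp
  have "max M 0 / ((real r + 2) * (real r + 1)) \<le> max M' 0 / ((real r + 2) * (real r + 1))"
    using assms D by (intro divide_right_mono) auto
  moreover have "0 < 1 + max M 0 / ((real r + 2) * (real r + 1))"
    using D by (intro add_pos_nonneg) auto
  ultimately have "inverse (1 + max M' 0 / ((real r + 2) * (real r + 1))) \<le> inverse (1 + max M 0 / ((real r + 2) * (real r + 1)))"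
    by (intro le_imp_inverse_le) auto
  then show ?thesis unfolding G_def by (intro mult_left_mono) auto
qed

lemma G_expand:
  assumes "0 \<le> M"
  shows "G r M = ((real r+2)*(real r+1)) / (real r * (((real r+2)*(real r+1)) + M))"
proof (cases "r = 0")
  case True
  then show ?thesis by (simp add: G_def)
next
  case False
  have D: "0 < (real r + 2) * (real r + 1)" by simp
  have "1 + M / ((real r + 2) * (real r + 1)) = (((real r+2)*(real r+1)) + M) / ((real r + 2) * (real r + 1))"
    using D by (simp add: field_simps)
  then show ?thesis using assms False D by (simp add: G_def max_def)
qed

lemma G_expand0:
  assumes "M \<le> 0"
  shows "G r M = ((real r+2)*(real r+1)) / (real r * ((real r+2)*(real r+1)))"
proof -
  have "G r M = G r 0" unfolding G_def using assms by (simp add: max_def)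
  also have "\<dots> = ((real r+2)*(real r+1)) / (real r * ((real r+2)*(real r+1)))"
    by (subst G_expand) simp_all
  finally show ?thesis .
qed

lemma final_ineq:
  fixes nu ni nb r :: nat
  assumes r: "r = nu + ni + nb" and hi: "ni = 0 \<or> ni + 2 \<le> r" and hb: "nb \<le> 2"
    and r1: "1 \<le> r" and r1': "r = 1 \<Longrightarrow> ni + nb = 0"
  shows "1 \<le> real nu * G r (2 * real (ni + nb) - real nb) + real ni * G (r - 2) (2 * real (ni + nb) - 4)
              + real nb * G (r - 1) (2 * real (ni + nb) - 4)"
proof -
  have nu: "real nu = real r - real ni - real nb" using r by simp
  consider "ni + nb = 0" | "ni = 1" "nb = 0" | "ni = 0" "nb = 1" | "ni \<ge> 2" "nb = 0" | "ni \<ge> 1" "nb = 1"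
    | "ni \<ge> 1" "nb = 2" | "ni = 0" "nb = 2"
    using hb by linarith
  then show ?thesis
  proof cases
    case 1
    then have "ni = 0" "nb = 0" by auto
    then show ?thesis using r r1 G_expand[of 0 r] by simp
  next
    case 2
    then have r3: "r \<ge> 3" using hi by simp
    have r2: "real (r-2) = real r - 2" using r3 by (simp add: of_nat_diff)
    have e1: "real nu * G r (2 * real (ni + nb) - real nb) = (real r-1) * (((real r+2)*(real r+1))/(real r*(((real r+2)*(real r+1))+2)))"
      using 2 nu by (simp add: G_expand)
    have e2: "real ni * G (r - 2) (2 * real (ni + nb) - 4) = 1 * ((((real r-2)+2)*((real r-2)+1))/((real r-2)*(((real r-2)+2)*((real r-2)+1))))"
      using 2 r2 G_expand0[of "-2" "r-2"] by simp
    have e3: "real nb * G (r - 1) (2 * real (ni + nb) - 4) = 0" using 2 by simp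
    have i: "3 \<le> real r" using r3 by simp
    show ?thesis using e1 e2 e3 ineq_Q0[OF TrueI i] by linarith
  next
    case 3
    then have r3: "r \<ge> 2" using r1 r1' by fastforce
    have r2: "real (r-1) = real r - 1" using r3 by (simp add: of_nat_diff)
    have e1: "real nu * G r (2 * real (ni + nb) - real nb) = (real r-1) * (((real r+2)*(real r+1))/(real r*(((real r+2)*(real r+1))+1)))"
      using 3 nu by (simp add: G_expand)
    have e3: "real nb * G (r - 1) (2 * real (ni + nb) - 4) = 1 * ((((real r-1)+2)*((real r-1)+1))/((real r-1)*(((real r-1)+2)*((real r-1)+1))))"
      using 3 r2 G_expand0[of "-2" "r-1"] by simp
    have e2: "real ni * G (r - 2) (2 * real (ni + nb) - 4) = 0" using 3 by simp
    have i: "2 \<le> real r" using r3 by simp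
    show ?thesis using e1 e2 e3 ineq_Q1[OF TrueI i] by linarith
  next
    case 4
    then have r3: "r \<ge> ni + 2" using hi by simp
    have r2: "real (r-2) = real r - 2" using r3 by (simp add: of_nat_diff)
    have e1: "real nu * G r (2 * real (ni + nb) - real nb) = (real r - real ni) * (((real r+2)*(real r+1))/(real r*(((real r+2)*(real r+1))+2*real ni)))"
      using 4 nu by (simp add: G_expand)
    have e2: "real ni * G (r - 2) (2 * real (ni + nb) - 4) = real ni * ((((real r-2)+2)*((real r-2)+1))/((real r-2)*((((real r-2)+2)*((real r-2)+1))+(2*real ni-4))))"
      using 4 r2 G_expand[of "2 * real ni - 4" "r-2"] by simp
    have e3: "real nb * G (r - 1) (2 * real (ni + nb) - 4) = 0" using 4 by simp
    show ?thesis using e1 e2 e3 ineq_P0[of "real ni" "real r"] r3 4 by simp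
  next
    case 5
    then have r3: "r \<ge> ni + 2" using hi by simp
    have r2: "real (r-2) = real r - 2" using r3 by (simp add: of_nat_diff)
    have r1: "real (r-1) = real r - 1" using r3 by (simp add: of_nat_diff)
    have e1: "real nu * G r (2 * real (ni + nb) - real nb) = (real r - (real ni + 1)) * (((real r+2)*(real r+1))/(real r*(((real r+2)*(real r+1))+(2*(real ni + 1)-1))))"
      using 5 nu by (simp add: G_expand)
    have e2: "real ni * G (r - 2) (2 * real (ni + nb) - 4) = ((real ni + 1) - 1) * ((((real r-2)+2)*((real r-2)+1))/((real r-2)*((((real r-2)+2)*((real r-2)+1))+(2*(real ni + 1)-4))))"
      using 5 r2 G_expand[of "2 * (real ni + 1) - 4" "r-2"] by simp
    have e3: "real nb * G (r - 1) (2 * real (ni + nb) - 4) = 1 * ((((real r-1)+2)*((real r-1)+1))/((real r-1)*((((real r-1)+2)*((real r-1)+1))+(2*(real ni + 1)-4))))"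
      using 5 r1 G_expand[of "2 * (real ni + 1) - 4" "r-1"] by simp
    show ?thesis using e1 e2 e3 ineq_P1[of "real ni + 1" "real r"] r3 5 by simp
  next
    case 6
    then have r3: "r \<ge> ni + 2" using hi by simp
    have r2: "real (r-2) = real r - 2" using r3 by (simp add: of_nat_diff)
    have r1: "real (r-1) = real r - 1" using r3 by (simp add: of_nat_diff)
    have e1: "real nu * G r (2 * real (ni + nb) - real nb) = (real r - (real ni + 2)) * (((real r+2)*(real r+1))/(real r*(((real r+2)*(real r+1))+(2*(real ni + 2)-2))))"
      using 6 nu by (simp add: G_expand)
    have e2: "real ni * G (r - 2) (2 * real (ni + nb) - 4) = ((real ni + 2) - 2) * ((((real r-2)+2)*((real r-2)+1))/((real r-2)*((((real r-2)+2)*((real r-2)+1))+(2*(real ni + 2)-4))))"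
      using 6 r2 G_expand[of "2 * (real ni + 2) - 4" "r-2"] by simp
    have e3: "real nb * G (r - 1) (2 * real (ni + nb) - 4) = 2 * ((((real r-1)+2)*((real r-1)+1))/((real r-1)*((((real r-1)+2)*((real r-1)+1))+(2*(real ni + 2)-4))))"
      using 6 r1 G_expand[of "2 * (real ni + 2) - 4" "r-1"] by simp
    show ?thesis using e1 e2 e3 ineq_P2[of "real ni + 2" "real r"] r3 6 by simp
  next
    case 7
    then have r3: "r \<ge> 2" using r by simp
    have r1: "real (r-1) = real r - 1" using r3 by (simp add: of_nat_diff)
    have e1: "real nu * G r (2 * real (ni + nb) - real nb) = (real r-2) * (((real r+2)*(real r+1))/(real r*(((real r+2)*(real r+1))+2)))"
      using 7 nu by (simp add: G_expand)
    have e3: "real nb * G (r - 1) (2 * real (ni + nb) - 4) = 2 * ((((real r-1)+2)*((real r-1)+1))/((real r-1)*(((real r-1)+2)*((real r-1)+1))))"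
      using 7 r1 G_expand0[of 0 "r-1"] by simp
    have e2: "real ni * G (r - 2) (2 * real (ni + nb) - 4) = 0" using 7 by simp
    have i: "2 \<le> real r" using r3 by simp
    show ?thesis using e1 e2 e3 ineq_P2z[OF TrueI i] by linarith
  qed
qed

definition del :: "nat \<Rightarrow> 'a list \<Rightarrow> 'a list" where
  "del p xs = take p xs @ drop (Suc p) xs"

lemma del_nth_eq:
  assumes "p < q" "q < length xs" "del p xs = del q xs"
  shows "xs ! (q - 1) = xs ! q"
proof -
  have "del p xs ! (q-1) = xs ! q" using assms(1,2) by (auto simp: del_def nth_append min_def)
  moreover have "del q xs ! (q-1) = xs ! (q-1)" using assms(1,2) by (simp add: del_def nth_append min_def)
  ultimately show ?thesis using assms(3) by simp
qed

lemma good_nonempty: "good R \<Longrightarrow> r \<in> set R \<Longrightarrow> r \<noteq> []"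
  by (simp add: good_def)

lemma good_const: "good R \<Longrightarrow> r \<in> set R \<Longrightarrow> a \<in> set r \<Longrightarrow> a = hd r"
  by (simp add: good_def)

lemma good_hd_neq: "good R \<Longrightarrow> Suc i < length R \<Longrightarrow> hd (R!i) \<noteq> hd (R ! Suc i)"
  unfolding good_def using successively_nth[of "\<lambda>a b. hd a \<noteq> hd b" R i] by simp

lemma good_take: "good R \<Longrightarrow> good (take k R)"
  unfolding good_def using successively_append_iff[of "\<lambda>a b. hd a \<noteq> hd b" "take k R" "drop k R"]
  by (auto dest: in_set_takeD)

lemma good_drop: "good R \<Longrightarrow> good (drop k R)"
  unfolding good_def using successively_append_iff[of "\<lambda>a b. hd a \<noteq> hd b" "take k R" "drop k R"]
  by (auto dest: in_set_dropD)

definition pre :: "'a list list \<Rightarrow> nat \<Rightarrow> 'a list" where "pre R i = concat (take i R)"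
definition post :: "'a list list \<Rightarrow> nat \<Rightarrow> 'a list" where "post R i = concat (drop (Suc i) R)"
definition ydel :: "'a list list \<Rightarrow> nat \<Rightarrow> 'a list" where "ydel R i = pre R i @ tl (R!i) @ post R i"

lemma decomp: "i < length R \<Longrightarrow> concat R = pre R i @ R!i @ post R i"
proof -
  assume i: "i < length R"
  have "concat R = concat (take i R @ R!i # drop (Suc i) R)"
    using arg_cong[OF id_take_nth_drop[OF i], of concat] .
  then show ?thesis by (simp add: pre_def post_def)
qed

lemma nth_nonempty: "good R \<Longrightarrow> i < length R \<Longrightarrow> R ! i \<noteq> []"
  using good_nonempty nth_mem by blast

lemma ydel_del:
  assumes g: "good R" and i: "i < length R"
  shows "ydel R i = del (length (pre R i)) (concat R)"
proof -
  have ne: "R ! i \<noteq> []" using nth_nonempty[OF g i] .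
  have "del (length (pre R i)) (concat R) = del (length (pre R i)) (pre R i @ R!i @ post R i)"
    using decomp[OF i] by simp
  also have "\<dots> = pre R i @ tl (R!i) @ post R i"
    using ne by (cases "R!i") (auto simp: del_def)
  finally show ?thesis by (simp add: ydel_def)
qed

lemma pre_len_less: "good R \<Longrightarrow> i < length R \<Longrightarrow> length (pre R i) < length (concat R)"
  using decomp[of i R] nth_nonempty[of R i] by simp

lemma one_del:
  assumes g: "good R" and i: "i < length R"
  shows "one_deletion (concat R) (ydel R i)"
  unfolding one_deletion_def using ydel_del[OF g i] pre_len_less[OF g i] by (auto simp: del_def)

lemma len_ydel:
  assumes g: "good R" and i: "i < length R"
  shows "length (ydel R i) = length (concat R) - 1"
proof -
  have l: "0 < length (R ! i)" using nth_nonempty[OF g i] by simp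
  show ?thesis using decomp[OF i] by (simp add: ydel_def) (use l in arith)
qed

lemma pre_Suc: "i < length R \<Longrightarrow> pre R (Suc i) = pre R i @ R ! i"
  by (simp add: pre_def take_Suc_conv_app_nth)

lemma pre_mono:
  assumes g: "good R" and ij: "i < j" and j: "j \<le> length R"
  shows "length (pre R i) < length (pre R j)"
proof -
  have "take j R = take (Suc i) R @ take (j - Suc i) (drop (Suc i) R)"
    using ij take_add[of "Suc i" "j - Suc i" R] by simp
  then have "length (pre R j) \<ge> length (pre R (Suc i))" by (simp add: pre_def)
  moreover have "length (pre R (Suc i)) = length (pre R i) + length (R ! i)"
    using ij j pre_Suc[of i R] by simp
  moreover have "0 < length (R ! i)" using nth_nonempty[OF g] ij j by simp
  ultimately show ?thesis by linarith
qed

lemma run_boundary: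
  assumes g: "good R" and j0: "0 < j" and j: "j < length R"
  shows "concat R ! (length (pre R j) - 1) \<noteq> concat R ! length (pre R j)"
proof -
  obtain k where k: "j = Suc k" using j0 by (cases j) auto
  have kR: "k < length R" using k j by simp
  have ne1: "R ! k \<noteq> []" using nth_nonempty[OF g kR] .
  have ne2: "R ! j \<noteq> []" using nth_nonempty[OF g j] .
  have pj: "pre R j = pre R k @ R ! k" using pre_Suc[OF kR] k by simp
  have x: "concat R = pre R j @ R!j @ post R j" using decomp[OF j] .
  have "concat R ! length (pre R j) = hd (R ! j)"
    using x ne2 by (simp add: nth_append hd_conv_nth)
  moreover have "concat R ! (length (pre R j) - 1) = last (R ! k)"
  proof -
    have "pre R j \<noteq> []" using pj ne1 by simp
    then have "concat R ! (length (pre R j) - 1) = last (pre R j)"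
      using x by (simp add: nth_append last_conv_nth)
    also have "\<dots> = last (R ! k)" using pj ne1 by simp
    finally show ?thesis .
  qed
  moreover have "last (R ! k) = hd (R ! k)"
    using good_const[OF g nth_mem[OF kR]] ne1 last_in_set by blast
  moreover have "hd (R ! k) \<noteq> hd (R ! j)" using good_hd_neq[OF g] k j by simp
  ultimately show ?thesis by simp
qed

lemma ydel_inj:
  assumes g: "good R"
  shows "inj_on (ydel R) {..<length R}"
proof -
  have *: "ydel R i \<noteq> ydel R j" if ij: "i < j" and j: "j < length R" for i j
  proof
    assume eq: "ydel R i = ydel R j"
    have i: "i < length R" using ij j by simp
    have "del (length (pre R i)) (concat R) = del (length (pre R j)) (concat R)"
      using eq ydel_del[OF g i] ydel_del[OF g j] by simp
    then have "concat R ! (length (pre R j) - 1) = concat R ! length (pre R j)"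
      using del_nth_eq pre_mono[OF g ij] j pre_len_less[OF g j] by (metis less_imp_le)
    then show False using run_boundary[OF g _ j] ij by simp
  qed
  show ?thesis
    unfolding inj_on_def
    by (metis * lessThan_iff linorder_neqE_nat)
qed

definition nunit :: "'a list list \<Rightarrow> nat" where
  "nunit R = length (filter (\<lambda>r. length r = 1) R)"

definition nbd :: "'a list list \<Rightarrow> nat" where
  "nbd R = card {i. i < length R \<and> (i = 0 \<or> i = length R - 1) \<and> length (R ! i) = 1}"

lemma good_succ_map: "successively (\<lambda>a b. hd a \<noteq> hd b) R \<longleftrightarrow> successively (\<noteq>) (map hd R)"
  by (simp add: successively_map)

lemma good_update:
  assumes g: "good R" and i: "i < length R" and t: "t \<noteq> []" "\<forall>a\<in>set t. a = hd t" "hd t = hd (R ! i)"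
  shows "good (R[i := t])"
proof -
  have "map hd (R[i := t]) = map hd R"
    using i t(3) list_update_id[of "map hd R" i] by (simp add: map_update)
  moreover have "successively (\<noteq>) (map hd R)" using g good_succ_map by (auto simp: good_def)
  ultimately have s: "successively (\<lambda>a b. hd a \<noteq> hd b) (R[i := t])" using good_succ_map by metis
  have "\<forall>r\<in>set (R[i := t]). r \<noteq> [] \<and> (\<forall>a\<in>set r. a = hd r)"
  proof
    fix r assume "r \<in> set (R[i := t])"
    then have "r = t \<or> r \<in> set R" using set_update_subset_insert[of R i t] by blast
    then show "r \<noteq> [] \<and> (\<forall>a\<in>set r. a = hd r)" using g t(1,2) by (auto simp: good_def)
  qed
  with s show ?thesis by (simp add: good_def)
qed

lemma filter_update_le:
  assumes i: "i < length xs"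
  shows "length (filter P (xs[i := v])) \<le> length (filter P xs) + 1"
proof -
  have a: "xs[i := v] = take i xs @ v # drop (Suc i) xs" using upd_conv_take_nth_drop[OF i] .
  have b: "length (filter P xs) = length (filter P (take i xs @ xs ! i # drop (Suc i) xs))"
    using arg_cong[OF id_take_nth_drop[OF i], of "\<lambda>l. length (filter P l)"] .
  show ?thesis unfolding a using b by simp
qed

lemma case_NU:
  assumes g: "good R" and i: "i < length R" and l: "length (R ! i) \<noteq> 1"
  shows "runs (ydel R i) = R[i := tl (R ! i)]"
    and "nunit (R[i := tl (R ! i)]) \<le> nunit R + 1"
    and "nbd R \<le> nbd (R[i := tl (R ! i)])"
proof -
  have ne: "R ! i \<noteq> []" using nth_nonempty[OF g i] .
  have l2: "length (R ! i) \<ge> 2" using ne l by (cases "R ! i") (auto simp: Suc_le_eq)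
  have tne: "tl (R ! i) \<noteq> []" using l2 by (cases "R ! i") auto
  have const: "\<forall>a\<in>set (R ! i). a = hd (R ! i)" using good_const[OF g nth_mem[OF i]] by blast
  have sub: "set (tl (R ! i)) \<subseteq> set (R ! i)" by (cases "R ! i") auto
  have thd: "hd (tl (R ! i)) = hd (R ! i)"
    using const hd_in_set[OF tne] sub by blast
  have tconst: "\<forall>a\<in>set (tl (R ! i)). a = hd (tl (R ! i))"
    using const sub thd by auto
  have gu: "good (R[i := tl (R ! i)])" using good_update[OF g i tne tconst thd] .
  have "concat (R[i := tl (R ! i)]) = ydel R i"
    using upd_conv_take_nth_drop[OF i] by (simp add: ydel_def pre_def post_def)
  then show "runs (ydel R i) = R[i := tl (R ! i)]" using runs_unique[OF gu] by simp
  show "nunit (R[i := tl (R ! i)]) \<le> nunit R + 1" unfolding nunit_def by (rule filter_update_le[OF i])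
  show "nbd R \<le> nbd (R[i := tl (R ! i)])" unfolding nbd_def
    by (rule card_mono) (use l i in \<open>auto simp: nth_list_update\<close>)
qed

lemma tl_unit: "length r = 1 \<Longrightarrow> tl r = []"
  by (cases r) auto

lemma decomp3:
  assumes "Suc (Suc k) < length R"
  shows "R = take k R @ R ! k # R ! Suc k # R ! Suc (Suc k) # drop (Suc (Suc (Suc k))) R"
proof -
  have "drop k R = R ! k # R ! Suc k # R ! Suc (Suc k) # drop (Suc (Suc (Suc k))) R"
    using assms by (metis Cons_nth_drop_Suc Suc_lessD)
  then show ?thesis by (metis append_take_drop_id)
qed

lemma bool_alt: "(a::bool) \<noteq> b \<Longrightarrow> b \<noteq> c \<Longrightarrow> a = c"
  by auto



lemma case_IU:
  fixes R :: "bool list list"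
  assumes g: "good R" and k: "Suc (Suc k) < length R" and l: "length (R ! Suc k) = 1"
  defines "R' \<equiv> take k R @ (R ! k @ R ! Suc (Suc k)) # drop (Suc (Suc (Suc k))) R"
  shows "runs (ydel R (Suc k)) = R'" and "length R' = length R - 2" and "nunit R' + 1 \<le> nunit R"
proof -
  have dR: "R = take k R @ R ! k # R ! Suc k # R ! Suc (Suc k) # drop (Suc (Suc (Suc k))) R"
    using decomp3[OF k] .
  have k0: "k < length R" "Suc k < length R" using k by auto
  have ne0: "R ! k \<noteq> []" using nth_nonempty[OF g] k0 by simp
  have ne2: "R ! Suc (Suc k) \<noteq> []" using nth_nonempty[OF g k] .
  have c0: "\<forall>a\<in>set (R ! k). a = hd (R ! k)" using good_const[OF g nth_mem[OF k0(1)]] by blast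
  have c2: "\<forall>a\<in>set (R ! Suc (Suc k)). a = hd (R ! Suc (Suc k))" using good_const[OF g nth_mem[OF k]] by blast
  have h02: "hd (R ! k) = hd (R ! Suc (Suc k))"
    using good_hd_neq[OF g, of k] good_hd_neq[OF g, of "Suc k"] k
      bool_alt[of "hd (R ! k)" "hd (R ! Suc k)" "hd (R ! Suc (Suc k))"] by simp
  let ?m = "R ! k @ R ! Suc (Suc k)"
  let ?D = "drop (Suc (Suc (Suc k))) R"
  have hm: "hd ?m = hd (R ! k)" using ne0 by simp
  have elems: "\<forall>r\<in>set R'. r \<noteq> [] \<and> (\<forall>a\<in>set r. a = hd r)"
  proof
    fix r assume "r \<in> set R'"
    then consider "r \<in> set (take k R)" | "r = ?m" | "r \<in> set ?D" unfolding R'_def by auto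
    then show "r \<noteq> [] \<and> (\<forall>a\<in>set r. a = hd r)"
    proof cases
      case 1 then show ?thesis using g by (auto simp: good_def dest: in_set_takeD)
    next
      case 2
      have "\<forall>a\<in>set ?m. a = hd ?m"
      proof
        fix a assume "a \<in> set ?m"
        then have "a \<in> set (R ! k) \<or> a \<in> set (R ! Suc (Suc k))" by simp
        then show "a = hd ?m" using c0 c2 h02 hm by metis
      qed
      then show ?thesis using 2 ne0 by simp
    next
      case 3 then show ?thesis using g by (auto simp: good_def dest: in_set_dropD)
    qed
  qed
  have sR: "successively (\<lambda>a b. hd a \<noteq> hd b) R" using g by (simp add: good_def)
  have dk: "drop k R = R ! k # drop (Suc k) R" using k0 by (simp add: Cons_nth_drop_Suc)
  have d2: "drop (Suc (Suc k)) R = R ! Suc (Suc k) # ?D" using k by (simp add: Cons_nth_drop_Suc)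
  have s1: "successively (\<lambda>a b. hd a \<noteq> hd b) (take k R)"
    using good_take[OF g] by (simp add: good_def)
  have "successively (\<lambda>a b. hd a \<noteq> hd b) (take k R @ drop k R)" using sR by simp
  then have j1: "take k R = [] \<or> hd (last (take k R)) \<noteq> hd (R ! k)"
    unfolding successively_append_iff dk by auto
  have s2: "successively (\<lambda>a b. hd a \<noteq> hd b) (R ! Suc (Suc k) # ?D)"
    using good_drop[OF g, of "Suc (Suc k)"] d2 by (simp add: good_def)
  have s3: "successively (\<lambda>a b. hd a \<noteq> hd b) (?m # ?D)"
    using s2 hm h02 by (simp add: successively_Cons)
  have "successively (\<lambda>a b. hd a \<noteq> hd b) R'"
    unfolding R'_def using s1 s3 j1 hm by (auto simp: successively_append_iff)
  with elems have gR': "good R'" by (simp add: good_def)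
  have "concat R' = ydel R (Suc k)"
  proof -
    have "take (Suc k) R = take k R @ [R ! k]" using k0 by (simp add: take_Suc_conv_app_nth)
    moreover note d2
    ultimately show ?thesis using tl_unit[OF l] by (simp add: R'_def ydel_def pre_def post_def)
  qed
  then show "runs (ydel R (Suc k)) = R'" using runs_unique[OF gR'] by simp
  show "length R' = length R - 2" unfolding R'_def using k by simp
  have "nunit R = nunit (take k R @ R ! k # R ! Suc k # R ! Suc (Suc k) # ?D)" using arg_cong[OF dR, of nunit] .
  moreover have "length ?m \<noteq> 1" using ne0 ne2 by (cases "R ! k") auto
  ultimately show "nunit R' + 1 \<le> nunit R" unfolding R'_def nunit_def using l by simp
qed


lemma case_BF:
  assumes g: "good R" and l: "length (R ! 0) = 1" and r: "2 \<le> length R"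
  shows "runs (ydel R 0) = drop 1 R" and "nunit (drop 1 R) + 1 = nunit R"
proof -
  have "R \<noteq> []" using r by auto
  then have dR: "R = R ! 0 # drop 1 R" using Cons_nth_drop_Suc[of 0 R] by simp
  have "concat (drop 1 R) = ydel R 0" using tl_unit[OF l] by (simp add: ydel_def pre_def post_def)
  then show "runs (ydel R 0) = drop 1 R" using runs_unique[OF good_drop[OF g], of 1] by simp
  have "nunit R = nunit (R ! 0 # drop 1 R)" using arg_cong[OF dR, of nunit] .
  then show "nunit (drop 1 R) + 1 = nunit R" using l by (simp add: nunit_def)
qed

lemma case_BL:
  assumes g: "good R" and i: "Suc i = length R" and l: "length (R ! i) = 1"
  shows "runs (ydel R i) = take i R" and "nunit (take i R) + 1 = nunit R"
proof -
  have dR: "R = take i R @ [R ! i]" using take_Suc_conv_app_nth[of i R] i by simp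
  have "concat (take i R) = ydel R i" using tl_unit[OF l] i by (simp add: ydel_def pre_def post_def)
  then show "runs (ydel R i) = take i R" using runs_unique[OF good_take[OF g], of i] by simp
  have "nunit R = nunit (take i R @ [R ! i])" using arg_cong[OF dR, of nunit] .
  then show "nunit (take i R) + 1 = nunit R" using l by (simp add: nunit_def)
qed

lemma G_nonneg: "0 \<le> G r M"
proof -
  have "0 < 1 + max M 0 / ((real r + 2) * (real r + 1))"
    by (intro add_pos_nonneg) auto
  then show ?thesis unfolding G_def by simp
qed

definition zf :: "bool list \<Rightarrow> real" where
  "zf y = fweight (num_runs y) (num_unit_runs y) (num_boundary_unit_runs y)"

lemma zf_runs: "zf y = G (length (runs y)) (2 * real (nunit (runs y)) - real (nbd (runs y)) - 2)"
  by (simp add: zf_def fweight_G num_runs_def num_unit_runs_def num_boundary_unit_runs_def nunit_def nbd_def)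

lemma zf_nonneg: "0 \<le> zf y"
  by (simp add: zf_runs G_nonneg)

lemma cover_x:
  fixes x :: "bool list"
  assumes lx: "2 \<le> length x"
  shows "1 \<le> (\<Sum>i<length (runs x). zf (ydel (runs x) i))"
proof -
  define R where "R = runs x"
  define r where "r = length R"
  have g: "good R" and cx: "concat R = x" using runs_good[of x] by (auto simp: R_def)
  define u where "u = nunit R"
  define b where "b = nbd R"
  define NU where "NU = {i. i < r \<and> length (R ! i) \<noteq> 1}"
  define IU where "IU = {i. i < r \<and> \<not> (i = 0 \<or> i = r - 1) \<and> length (R ! i) = 1}"
  define BU where "BU = {i. i < r \<and> (i = 0 \<or> i = r - 1) \<and> length (R ! i) = 1}"
  have r1: "1 \<le> r" using lx cx by (cases R) (auto simp: r_def)
  have r1len: "length (R ! 0) = length x" if "r = 1"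
  proof -
    have "R = [R ! 0]" using that by (cases R) (auto simp: r_def)
    then have "concat R = R ! 0" by (metis concat.simps append_Nil2)
    then show ?thesis using cx by simp
  qed
  have unit_r2: "2 \<le> r" if "i < r" "length (R ! i) = 1" for i
  proof (rule ccontr)
    assume "\<not> 2 \<le> r"
    then have "r = 1" using r1 by simp
    then show False using r1len that lx by simp
  qed
  have fin: "finite NU" "finite IU" "finite BU" by (auto simp: NU_def IU_def BU_def)
  have union: "{..<r} = NU \<union> IU \<union> BU" by (auto simp: NU_def IU_def BU_def)
  have disj: "NU \<inter> IU = {}" "(NU \<union> IU) \<inter> BU = {}" "IU \<inter> BU = {}" by (auto simp: NU_def IU_def BU_def)
  have sum_split: "(\<Sum>i<r. zf (ydel R i)) = (\<Sum>i\<in>NU. zf (ydel R i)) + (\<Sum>i\<in>IU. zf (ydel R i)) + (\<Sum>i\<in>BU. zf (ydel R i))"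
    unfolding union using fin disj by (simp add: sum.union_disjoint)
  have cardr: "r = card NU + card IU + card BU"
  proof -
    have "card {..<r} = card (NU \<union> IU \<union> BU)" using union by simp
    also have "\<dots> = card NU + card IU + card BU" using fin disj by (simp add: card_Un_disjoint)
    finally show ?thesis by simp
  qed
  have ub: "u = card IU + card BU"
  proof -
    have "u = card {i. i < r \<and> length (R ! i) = 1}" unfolding u_def nunit_def r_def by (rule length_filter_conv_card)
    also have "{i. i < r \<and> length (R ! i) = 1} = IU \<union> BU" by (auto simp: IU_def BU_def)
    also have "card (IU \<union> BU) = card IU + card BU" using fin disj by (simp add: card_Un_disjoint)
    finally show ?thesis .
  qed
  have bb: "b = card BU" unfolding b_def nbd_def BU_def r_def by simp
  have hb: "card BU \<le> 2"
  proof -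
    have "BU \<subseteq> {0, r - 1}" by (auto simp: BU_def)
    then have "card BU \<le> card {0, r - 1}" by (intro card_mono) auto
    also have "\<dots> \<le> 2" by (cases "r - 1 = 0") auto
    finally show ?thesis .
  qed
  have hi: "card IU = 0 \<or> card IU + 2 \<le> r"
  proof (cases "IU = {}")
    case True then show ?thesis by simp
  next
    case False
    then obtain i where "i \<in> IU" by auto
    then have r3: "3 \<le> r" by (auto simp: IU_def)
    have "IU \<subseteq> {1..<r-1}" by (auto simp: IU_def)
    then have "card IU \<le> card {1..<r-1}" by (intro card_mono) auto
    then have "card IU \<le> r - 2" by simp
    then show ?thesis using r3 by linarith
  qed
  have r1': "card IU + card BU = 0" if "r = 1"
  proof -
    have "IU = {}" "BU = {}" using that r1len lx by (auto simp: IU_def BU_def)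
    then show ?thesis by simp
  qed
  have bNU: "G r (2 * real u - real b) \<le> zf (ydel R i)" if "i \<in> NU" for i
  proof -
    have i: "i < r" and l: "length (R ! i) \<noteq> 1" using that by (auto simp: NU_def)
    note c = case_NU[OF g i[unfolded r_def] l]
    have "zf (ydel R i) = G r (2 * real (nunit (R[i := tl (R ! i)])) - real (nbd (R[i := tl (R ! i)])) - 2)"
      by (simp add: zf_runs c(1) r_def)
    moreover have "2 * real (nunit (R[i := tl (R ! i)])) - real (nbd (R[i := tl (R ! i)])) - 2 \<le> 2 * real u - real b"
    proof -
      have "real (nunit (R[i := tl (R ! i)])) \<le> real u + 1" using c(2) unfolding u_def by linarith
      moreover have "real b \<le> real (nbd (R[i := tl (R ! i)]))" using c(3) unfolding b_def by linarith
      ultimately show ?thesis by linarith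
    qed
    ultimately show ?thesis using G_anti by metis
  qed
  have bIU: "G (r - 2) (2 * real u - 4) \<le> zf (ydel R i)" if "i \<in> IU" for i
  proof -
    have i: "i < r" and i0: "i \<noteq> 0" and ir: "i \<noteq> r - 1" and l: "length (R ! i) = 1" using that by (auto simp: IU_def)
    obtain k where k: "i = Suc k" using i0 by (cases i) auto
    have kr: "Suc (Suc k) < length R" using i ir k by (simp add: r_def)
    note c = case_IU[OF g kr l[unfolded k]]
    define R' where "R' = take k R @ (R ! k @ R ! Suc (Suc k)) # drop (Suc (Suc (Suc k))) R"
    have "zf (ydel R i) = G (r - 2) (2 * real (nunit R') - real (nbd R') - 2)"
      using c(1,2) kr by (simp add: zf_runs k R'_def r_def)
    moreover have "2 * real (nunit R') - real (nbd R') - 2 \<le> 2 * real u - 4"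
    proof -
      have "real (nunit R') + 1 \<le> real u" using c(3) unfolding u_def R'_def by linarith
      then show ?thesis by linarith
    qed
    ultimately show ?thesis using G_anti by metis
  qed
  have bBU: "G (r - 1) (2 * real u - 4) \<le> zf (ydel R i)" if "i \<in> BU" for i
  proof -
    have i: "i < r" and ib: "i = 0 \<or> i = r - 1" and l: "length (R ! i) = 1" using that by (auto simp: BU_def)
    have r2: "2 \<le> r" using unit_r2[OF i l] .
    show ?thesis
    proof (cases "i = 0")
      case True
      note c = case_BF[OF g l[unfolded True] r2[unfolded r_def]]
      have "zf (ydel R i) = G (r - 1) (2 * real (nunit (drop 1 R)) - real (nbd (drop 1 R)) - 2)"
        using c(1) True by (simp add: zf_runs r_def)
      moreover have "2 * real (nunit (drop 1 R)) - real (nbd (drop 1 R)) - 2 \<le> 2 * real u - 4"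
      proof -
        have "real (nunit (drop 1 R)) + 1 = real u" using c(2) unfolding u_def by (metis of_nat_1 of_nat_add)
        then show ?thesis by linarith
      qed
      ultimately show ?thesis using G_anti by metis
    next
      case False
      then have ii: "Suc i = length R" using ib i by (simp add: r_def)
      note c = case_BL[OF g ii l]
      have "zf (ydel R i) = G (r - 1) (2 * real (nunit (take i R)) - real (nbd (take i R)) - 2)"
        using c(1) ii[symmetric] by (simp add: zf_runs r_def)
      moreover have "2 * real (nunit (take i R)) - real (nbd (take i R)) - 2 \<le> 2 * real u - 4"
      proof -
        have "real (nunit (take i R)) + 1 = real u" using c(2) unfolding u_def by (metis of_nat_1 of_nat_add)
        then show ?thesis by linarith
      qed
      ultimately show ?thesis using G_anti by metis
    qed
  qed
  have s1: "real (card NU) * G r (2 * real u - real b) \<le> (\<Sum>i\<in>NU. zf (ydel R i))"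
    using sum_bounded_below[of NU "G r (2 * real u - real b)" "\<lambda>i. zf (ydel R i)"] bNU by simp
  have s2: "real (card IU) * G (r - 2) (2 * real u - 4) \<le> (\<Sum>i\<in>IU. zf (ydel R i))"
    using sum_bounded_below[of IU "G (r - 2) (2 * real u - 4)" "\<lambda>i. zf (ydel R i)"] bIU by simp
  have s3: "real (card BU) * G (r - 1) (2 * real u - 4) \<le> (\<Sum>i\<in>BU. zf (ydel R i))"
    using sum_bounded_below[of BU "G (r - 1) (2 * real u - 4)" "\<lambda>i. zf (ydel R i)"] bBU by simp
  have fi: "1 \<le> real (card NU) * G r (2 * real (card IU + card BU) - real (card BU))
      + real (card IU) * G (r - 2) (2 * real (card IU + card BU) - 4)
      + real (card BU) * G (r - 1) (2 * real (card IU + card BU) - 4)"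
    by (rule final_ineq[OF cardr hi hb r1 r1'])
  have "1 \<le> (\<Sum>i<r. zf (ydel R i))"
    using fi s1 s2 s3 sum_split ub bb by simp
  then show ?thesis by (simp add: R_def r_def)
qed

lemma finite_bin_strings: "finite (bin_strings m)"
  using finite_lists_length_eq[of "UNIV :: bool set" m] by (simp add: bin_strings_def)

lemma cover_sum:
  fixes x :: "bool list"
  assumes lx: "2 \<le> length x"
  shows "1 \<le> (\<Sum>y\<in>bin_strings (length x - 1). del_channel x y * zf y)"
proof -
  define R where "R = runs x"
  have g: "good R" and cx: "concat R = x" using runs_good[of x] by (auto simp: R_def)
  define S where "S = ydel R ` {..<length R}"
  have SY: "S \<subseteq> bin_strings (length x - 1)"
    using len_ydel[OF g] cx by (auto simp: S_def bin_strings_def)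
  have "(\<Sum>y\<in>S. del_channel x y * zf y) \<le> (\<Sum>y\<in>bin_strings (length x - 1). del_channel x y * zf y)"
    by (rule sum_mono2[OF finite_bin_strings SY]) (simp add: del_channel_def zf_nonneg)
  moreover have "(\<Sum>y\<in>S. del_channel x y * zf y) = (\<Sum>i<length R. del_channel x (ydel R i) * zf (ydel R i))"
    unfolding S_def by (rule sum.reindex_cong[OF ydel_inj[OF g]]) auto
  moreover have "(\<Sum>i<length R. del_channel x (ydel R i) * zf (ydel R i)) = (\<Sum>i<length R. zf (ydel R i))"
    using one_del[OF g] cx by (intro sum.cong) (auto simp: del_channel_def)
  moreover have "1 \<le> (\<Sum>i<length R. zf (ydel R i))" using cover_x[OF lx] by (simp add: R_def)
  ultimately show ?thesis by linarith
qed

theorem theorem1: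
  fixes n :: nat
  assumes "n \<ge> 2"
  defines "z \<equiv> (\<lambda>y::bool list. fweight (num_runs y) (num_unit_runs y) (num_boundary_unit_runs y))"
  shows "frac_cover_feasible (bin_strings n) (bin_strings (n - 1)) del_channel z
         \<and> kappa_star (bin_strings n) (bin_strings (n - 1)) del_channel \<le> (\<Sum>y\<in>bin_strings (n - 1). z y)"
proof -
  have zz: "z = zf" unfolding z_def zf_def by (rule ext) simp
  have feas: "frac_cover_feasible (bin_strings n) (bin_strings (n - 1)) del_channel z"
    unfolding frac_cover_feasible_def zz
  proof (intro conjI ballI)
    fix y show "0 \<le> zf y" by (rule zf_nonneg)
  next
    fix x assume "x \<in> bin_strings n"
    then have lx: "length x = n" by (simp add: bin_strings_def)
    show "1 \<le> (\<Sum>y\<in>bin_strings (n - 1). del_channel x y * zf y)"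
      using cover_sum[of x] lx assms(1) by simp
  qed
  have "kappa_star (bin_strings n) (bin_strings (n - 1)) del_channel \<le> (\<Sum>y\<in>bin_strings (n - 1). z y)"
    unfolding kappa_star_def
  proof (rule cInf_lower)
    show "(\<Sum>y\<in>bin_strings (n - 1). z y) \<in> {\<Sum>y\<in>bin_strings (n - 1). z y |z. frac_cover_feasible (bin_strings n) (bin_strings (n - 1)) del_channel z}"
      using feas by blast
    show "bdd_below {\<Sum>y\<in>bin_strings (n - 1). z y |z. frac_cover_feasible (bin_strings n) (bin_strings (n - 1)) del_channel z}"
      by (rule bdd_belowI[of _ 0]) (auto simp: frac_cover_feasible_def intro!: sum_nonneg)
  qed
  with feas show ?thesis by simp
qed

end
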